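(* Let $U\subset\mathbb{R}^2$ be open and let $f=u+iv$ be a holomorphic function of $\xi+i\eta$ on $U$ ($u,v$ real). Then the function $$F(x)=u(x_0,|\vec x|)+\frac{\vec x}{|\vec x|}\,v(x_0,|\vec x|),$$ defined for paravectors $x=x_0+\vec x$ with $\vec x\neq0$ and $(x_0,|\vec x|)\in U$, is holomorphic Cliffordian.
   Context: $\mathbb{R}_{0,3}$ is the real Clifford algebra generated by $e_1,e_2,e_3$ with $e_ie_j+e_je_i=-2\delta_{ij}$; $e_0=1$. A paravector is $x=x_0+\vec x$ with $\vec x=x_1e_1+x_2e_2+x_3e_3$, $|\vec x|=(x_1^2+x_2^2+x_3^2)^{1/2}$; paravectors are identified with $\mathbb{R}^4$. With $D=\sum_{i=0}^3 e_i\partial/\partial x_i$ and $\Delta=\sum_{i=0}^3\partial^2/\partial x_i^2$, a function is holomorphic Cliffordian if $D\Delta F=0$. *)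

theory Defs
  imports "HOL-Analysis.Analysis"
begin

text \<open>Paravectors x = x0 + x1 e1 + x2 e2 + x3 e3 are identified with real^4;
  coordinate i (i = 0..3) is xc x i.\<close>

definition xc :: "real^4 \<Rightarrow> nat \<Rightarrow> real" where
  "xc x i = x $ (of_nat i :: 4)"

definition unit4 :: "nat \<Rightarrow> real^4" where
  "unit4 i = axis (of_nat i :: 4) 1"

definition vnorm :: "real^4 \<Rightarrow> real" where
  "vnorm x = sqrt ((xc x 1)\<^sup>2 + (xc x 2)\<^sup>2 + (xc x 3)\<^sup>2)"

text \<open>Elements of the Clifford algebra R_{0,3}: coefficient functions on the
  basis blades e_A, A \<subseteq> {1,2,3} (values outside Pow {1,2,3} are ignored).\<close>
type_synonym mv = "nat set \<Rightarrow> real"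

definition blades :: "nat set set" where
  "blades = Pow {1,2,3}"

text \<open>Sign in e_A e_B = bsign A B e_{A \<triangle> B}, with e_i e_j + e_j e_i = -2 delta_ij.\<close>
definition bsign :: "nat set \<Rightarrow> nat set \<Rightarrow> real" where
  "bsign A B = (-1) ^ card {(a, b). a \<in> A \<and> b \<in> B \<and> b < a} * (-1) ^ card (A \<inter> B)"

definition clmul :: "mv \<Rightarrow> mv \<Rightarrow> mv" where
  "clmul p q = (\<lambda>C. \<Sum>A\<in>blades. \<Sum>B\<in>blades.
      if (A - B) \<union> (B - A) = C then bsign A B * p A * q B else 0)"

definition bset :: "nat \<Rightarrow> nat set" where
  "bset i = (if i = 0 then {} else {i})"

definition ebasis :: "nat \<Rightarrow> mv" where
  "ebasis i = (\<lambda>A. if A = bset i then 1 else 0)"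

definition para :: "real^4 \<Rightarrow> mv" where
  "para p = (\<lambda>A. \<Sum>i<4. xc p i * ebasis i A)"

definition pd :: "nat \<Rightarrow> (real^4 \<Rightarrow> real) \<Rightarrow> real^4 \<Rightarrow> real" where
  "pd i g x = deriv (\<lambda>t. g (x + t *\<^sub>R unit4 i)) 0"

definition lap :: "(real^4 \<Rightarrow> mv) \<Rightarrow> real^4 \<Rightarrow> mv" where
  "lap F x = (\<lambda>A. \<Sum>i<4. pd i (pd i (\<lambda>y. F y A)) x)"

definition Dop :: "(real^4 \<Rightarrow> mv) \<Rightarrow> real^4 \<Rightarrow> mv" where
  "Dop F x = (\<lambda>C. \<Sum>i<4. clmul (ebasis i) (\<lambda>A. pd i (\<lambda>y. F y A) x) C)"

definition diff3_on :: "(real^4 \<Rightarrow> real) \<Rightarrow> (real^4) set \<Rightarrow> bool" where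
  "diff3_on g S \<longleftrightarrow> g differentiable_on S \<and>
     (\<forall>i<4. pd i g differentiable_on S) \<and>
     (\<forall>i<4. \<forall>j<4. pd j (pd i g) differentiable_on S)"

definition holomorphic_cliffordian :: "(real^4 \<Rightarrow> mv) \<Rightarrow> (real^4) set \<Rightarrow> bool" where
  "holomorphic_cliffordian F S \<longleftrightarrow>
     (\<forall>A\<in>blades. diff3_on (\<lambda>y. F y A) S) \<and>
     (\<forall>x\<in>S. \<forall>C\<in>blades. Dop (lap F) x C = 0)"

end

theory Submission imports Defs "HOL-Complex_Analysis.Cauchy_Integral_Formula" begin

lemma xc_hd: "((\<lambda>x. xc x k) has_derivative (\<lambda>h. xc h k)) F"
  unfolding xc_def by (rule bounded_linear_imp_has_derivative[OF bounded_linear_vec_nth])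

lemma sum4: "(\<Sum>i<(4::nat). g i) = g 0 + g 1 + g 2 + (g 3 :: 'a::comm_monoid_add)"
  by (simp add: eval_nat_numeral ac_simps)

definition qn :: "real^4 \<Rightarrow> real" where
  "qn x = (xc x 1)\<^sup>2 + (xc x 2)\<^sup>2 + (xc x 3)\<^sup>2"

lemma qn_hd: "(qn has_derivative (\<lambda>h. 2 * xc x 1 * xc h 1 + 2 * xc x 2 * xc h 2 + 2 * xc x 3 * xc h 3)) (at x)"
  unfolding qn_def
  by (auto intro!: derivative_eq_intros xc_hd)

lemma vnorm_qn: "vnorm x = sqrt (qn x)" by (simp add: vnorm_def qn_def)

lemma vnorm_hd: assumes "vnorm x \<noteq> 0"
  shows "(vnorm has_derivative (\<lambda>h. (xc x 1 * xc h 1 + xc x 2 * xc h 2 + xc x 3 * xc h 3) / vnorm x)) (at x)"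
proof -
  have q: "qn x > 0" using assms unfolding vnorm_qn
    by (metis qn_def add_nonneg_nonneg le_less real_sqrt_zero zero_le_power2)
  have "((\<lambda>x. sqrt (qn x)) has_derivative (\<lambda>h. (2 * xc x 1 * xc h 1 + 2 * xc x 2 * xc h 2 + 2 * xc x 3 * xc h 3) * (inverse (sqrt (qn x)) / 2))) (at x)"
    by (rule has_derivative_real_sqrt[OF q qn_hd])
  then show ?thesis unfolding vnorm_qn[abs_def]
    by (rule has_derivative_eq_rhs) (use assms in \<open>auto simp: field_simps vnorm_qn\<close>)
qed

lemma inv_vnorm_hd: assumes "vnorm x \<noteq> 0"
  shows "((\<lambda>y. 1 / vnorm y) has_derivative (\<lambda>h. - (xc x 1 * xc h 1 + xc x 2 * xc h 2 + xc x 3 * xc h 3) / (vnorm x)^3)) (at x)"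
proof -
  have "((\<lambda>y. inverse (vnorm y)) has_derivative (\<lambda>h. - (inverse (vnorm x) * ((xc x 1 * xc h 1 + xc x 2 * xc h 2 + xc x 3 * xc h 3) / vnorm x) * inverse (vnorm x)))) (at x)"
    by (rule Deriv.has_derivative_inverse[OF assms vnorm_hd[OF assms]])
  from this[unfolded inverse_eq_divide] show ?thesis
    by (rule has_derivative_eq_rhs) (use assms in \<open>auto simp: field_simps power3_eq_cube\<close>)
qed

definition zz :: "real^4 \<Rightarrow> complex" where
  "zz x = Complex (xc x 0) (vnorm x)"

lemma zz_hd: assumes "vnorm x \<noteq> 0"
  shows "(zz has_derivative (\<lambda>h. Complex (xc h 0) ((xc x 1 * xc h 1 + xc x 2 * xc h 2 + xc x 3 * xc h 3) / vnorm x))) (at x)"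
  unfolding zz_def[abs_def] Complex_eq
  by (auto intro!: derivative_eq_intros xc_hd vnorm_hd assms)

definition rinv :: "real^4 \<Rightarrow> real" where "rinv x = 1 / vnorm x"

datatype ex = Cn real | Xv nat | Iv | RF nat | IF nat | Ad ex ex | Mu ex ex

fun ev :: "(complex \<Rightarrow> complex) \<Rightarrow> ex \<Rightarrow> real^4 \<Rightarrow> real" where
  "ev f (Cn c) x = c"
| "ev f (Xv k) x = (if k < 4 then xc x k else 0)"
| "ev f Iv x = rinv x"
| "ev f (RF n) x = Re ((deriv ^^ n) f (zz x))"
| "ev f (IF n) x = Im ((deriv ^^ n) f (zz x))"
| "ev f (Ad a b) x = ev f a x + ev f b x"
| "ev f (Mu a b) x = ev f a x * ev f b x"

fun dE :: "nat \<Rightarrow> ex \<Rightarrow> ex" where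
  "dE i (Cn c) = Cn 0"
| "dE i (Xv k) = Cn (if i = k then 1 else 0)"
| "dE i Iv = (if i = 0 then Cn 0 else Mu (Cn (-1)) (Mu (Xv i) (Mu Iv (Mu Iv Iv))))"
| "dE i (RF n) = (if i = 0 then RF (Suc n) else Mu (Cn (-1)) (Mu (Xv i) (Mu Iv (IF (Suc n)))))"
| "dE i (IF n) = (if i = 0 then IF (Suc n) else Mu (Xv i) (Mu Iv (RF (Suc n))))"
| "dE i (Ad a b) = Ad (dE i a) (dE i b)"
| "dE i (Mu a b) = Ad (Mu (dE i a) b) (Mu a (dE i b))"

lemma gd_hd:
  assumes "open U" "f holomorphic_on U" "zz x \<in> U" "vnorm x \<noteq> 0"
  shows "((\<lambda>y. (deriv ^^ n) f (zz y)) has_derivative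
           (\<lambda>h. (deriv ^^ Suc n) f (zz x) * Complex (xc h 0) ((xc x 1 * xc h 1 + xc x 2 * xc h 2 + xc x 3 * xc h 3) / vnorm x))) (at x)"
proof -
  have "((deriv ^^ n) f has_field_derivative deriv ((deriv ^^ n) f) (zz x)) (at (zz x))"
    by (rule holomorphic_derivI[OF holomorphic_higher_deriv[OF assms(2,1)] assms(1,3)])
  then have "((deriv ^^ n) f has_derivative (*) ((deriv ^^ Suc n) f (zz x))) (at (zz x))"
    by (simp add: has_field_derivative_def)
  from has_derivative_compose[OF zz_hd[OF assms(4)] this] show ?thesis .
qed

lemma ev_hd:
  assumes "open U" "f holomorphic_on U" "zz x \<in> U" "vnorm x \<noteq> 0"
  shows "(ev f e has_derivative (\<lambda>h. \<Sum>i<4. xc h i * ev f (dE i e) x)) (at x)"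
proof (induction e)
  case (Cn c)
  then show ?case by (simp add: ev.simps[abs_def])
next
  case (Xv k)
  then show ?case 
  proof (cases "k < 4")
    case True
    then have "k = 0 \<or> k = 1 \<or> k = 2 \<or> k = 3" by auto
    then show ?thesis
      by (elim disjE) (auto simp: sum4 intro!: has_derivative_eq_rhs[OF xc_hd] ext)
  qed (auto simp: sum4)
next
  case Iv
  then show ?case
    unfolding ev.simps rinv_def[abs_def]
    by (auto simp: sum4 intro!: has_derivative_eq_rhs[OF inv_vnorm_hd[OF assms(4)]] ext) (simp add: field_simps power3_eq_cube assms rinv_def)
next
  case (RF n)
  then show ?case
    by (auto simp: sum4 intro!: has_derivative_eq_rhs[OF has_derivative_Re[OF gd_hd[OF assms]]] ext) (simp add: field_simps assms rinv_def)
next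
  case (IF n)
  then show ?case
    by (auto simp: sum4 intro!: has_derivative_eq_rhs[OF has_derivative_Im[OF gd_hd[OF assms]]] ext) (simp add: field_simps assms rinv_def)
next
  case (Ad a b)
  then show ?case
    by (auto intro!: has_derivative_eq_rhs[OF has_derivative_add[OF Ad.IH]] ext simp: sum.distrib algebra_simps)
next
  case (Mu a b)
  then show ?case
    by (auto intro!: has_derivative_eq_rhs[OF has_derivative_mult[OF Mu.IH]] ext simp: sum.distrib algebra_simps sum_distrib_left sum_distrib_right)
qed

lemma xc_unit: assumes "i < 4" "k < 4" shows "xc (unit4 i) k = (if i = k then 1 else 0)"
proof -
  have "i = 0 \<or> i = 1 \<or> i = 2 \<or> i = 3" "k = 0 \<or> k = 1 \<or> k = 2 \<or> k = 3" using assms by auto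
  then show ?thesis by (auto simp: xc_def unit4_def axis_def)
qed

lemma xc_scaleR: "xc (t *\<^sub>R v) k = t * xc v k"
  by (simp add: xc_def)

lemma lin_unit: assumes "i < 4"
  shows "(\<Sum>k<4. xc (t *\<^sub>R unit4 i) k * c k) = t * (c i :: real)"
proof -
  have "i = 0 \<or> i = 1 \<or> i = 2 \<or> i = 3" using assms by auto
  then show ?thesis by (auto simp: sum4 xc_scaleR xc_unit)
qed

definition Sdom :: "complex set \<Rightarrow> (real^4) set" where
  "Sdom U = {x. vnorm x \<noteq> 0 \<and> zz x \<in> U}"

lemma g_hd:
  assumes "open U" "f holomorphic_on U" "open (Sdom U)" "x \<in> Sdom U"
    "\<And>y. y \<in> Sdom U \<Longrightarrow> g y = ev f e y"
  shows "(g has_derivative (\<lambda>h. \<Sum>i<4. xc h i * ev f (dE i e) x)) (at x)"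
  using assms(4) by (intro has_derivative_transform_within_open[OF ev_hd[OF assms(1,2)] assms(3,4)])
     (auto simp: Sdom_def assms(5))

lemma diff_ev:
  assumes "open U" "f holomorphic_on U" "open (Sdom U)" "x \<in> Sdom U"
    "\<And>y. y \<in> Sdom U \<Longrightarrow> g y = ev f e y"
  shows "g differentiable (at x)"
  using g_hd[OF assms] by (auto simp: differentiable_def)

lemma pd_ev:
  assumes "open U" "f holomorphic_on U" "open (Sdom U)" "x \<in> Sdom U"
    "\<And>y. y \<in> Sdom U \<Longrightarrow> g y = ev f e y" "i < 4"
  shows "pd i g x = ev f (dE i e) x"
proof -
  have h: "(g has_derivative (\<lambda>h. \<Sum>k<4. xc h k * ev f (dE k e) x)) (at (x + 0 *\<^sub>R unit4 i))"
    using g_hd[OF assms(1-5)] by simp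
  have l: "((\<lambda>t::real. x + t *\<^sub>R unit4 i) has_derivative (\<lambda>t. t *\<^sub>R unit4 i)) (at 0)"
    by (auto intro!: derivative_eq_intros)
  have "((\<lambda>t. g (x + t *\<^sub>R unit4 i)) has_derivative (\<lambda>t. t * ev f (dE i e) x)) (at 0)"
    using has_derivative_compose[OF l h] by (simp add: lin_unit[OF assms(6)])
  then have "((\<lambda>t. g (x + t *\<^sub>R unit4 i)) has_field_derivative ev f (dE i e) x) (at 0)"
    unfolding has_field_derivative_def by (rule has_derivative_eq_rhs) (auto simp: mult.commute)
  then show ?thesis unfolding pd_def by (rule DERIV_imp_deriv)
qed

lemma open_Sdom: "open U \<Longrightarrow> open (Sdom U)"
proof -
  assume U: "open U"
  have cv: "continuous_on UNIV vnorm" unfolding vnorm_def[abs_def] xc_def by (intro continuous_intros)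
  have cz: "continuous_on UNIV zz" unfolding zz_def[abs_def] Complex_eq xc_def
    using cv by (intro continuous_intros) auto
  have "Sdom U = vnorm -` (-{0}) \<inter> zz -` U" by (auto simp: Sdom_def)
  moreover have "open (vnorm -` (-{0}))" by (rule open_vimage[OF _ cv]) auto
  ultimately show ?thesis using open_vimage[OF U cz] by (simp add: open_Int)
qed

lemma vnorm_sq: "(vnorm y)^2 = (xc y 1)^2 + (xc y 2)^2 + (xc y 3)^2"
  unfolding vnorm_def by simp

lemma rinv_rel: "vnorm y \<noteq> 0 \<Longrightarrow> (rinv y)^2 * ((xc y 1)^2 + (xc y 2)^2 + (xc y 3)^2) = 1"
  unfolding vnorm_sq[symmetric] rinv_def by (simp add: field_simps)

definition Bx :: ex where
  "Bx = Mu (Cn 2) (Ad (Mu Iv (Mu Iv (RF 1))) (Mu (Cn (-1)) (Mu Iv (Mu Iv (Mu Iv (IF 0))))))"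
definition LA :: ex where "LA = Mu (Cn (-2)) (Mu Iv (IF 1))"

lemma id0: "vnorm y \<noteq> 0 \<Longrightarrow> (\<Sum>i<4. ev f (dE i (dE i (RF 0))) y) = ev f LA y"
  using rinv_rel[of y] unfolding LA_def by (simp add: sum4) algebra

lemma idj: assumes "vnorm y \<noteq> 0" "j \<in> {1,2,3}"
  shows "(\<Sum>i<4. ev f (dE i (dE i (Mu (Xv j) (Mu Iv (IF 0))))) y) = ev f (Mu (Xv j) Bx) y"
proof -
  have r: "(rinv y)^2 * ((xc y 1)^2 + (xc y 2)^2 + (xc y 3)^2) = 1" using rinv_rel[OF assms(1)] .
  consider "j = 1" | "j = 2" | "j = 3" using assms(2) by auto
  then show ?thesis
  proof cases
    case 1 show ?thesis using r unfolding 1 Bx_def by (simp add: sum4) algebra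
  next
    case 2 show ?thesis using r unfolding 2 Bx_def by (simp add: sum4) algebra
  next
    case 3 show ?thesis using r unfolding 3 Bx_def by (simp add: sum4) algebra
  qed
qed

lemma fin0: "vnorm y \<noteq> 0 \<Longrightarrow>
   ev f (dE 0 LA) y - (\<Sum>j\<in>{1,2,3}. ev f (dE j (Mu (Xv j) Bx)) y) = 0"
  using rinv_rel[of y] unfolding Bx_def LA_def by simp algebra

lemma fin1: "k \<in> {1,2,3} \<Longrightarrow> ev f (dE 0 (Mu (Xv k) Bx)) y + ev f (dE k LA) y = 0"
  unfolding Bx_def LA_def by (auto simp: algebra_simps)

lemma fin2: "k \<in> {1,2,3} \<Longrightarrow> l \<in> {1,2,3} \<Longrightarrow> k \<noteq> l \<Longrightarrow>
   ev f (dE k (Mu (Xv l) Bx)) y = ev f (dE l (Mu (Xv k) Bx)) y"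
  unfolding Bx_def by (auto simp: algebra_simps)

lemma blades_eq: "blades = {{},{1},{2},{3},{1,2},{1,3},{2,3},{1,2,3}}"
  unfolding blades_def by (simp add: Pow_insert insert_commute)

definition sd :: "nat set \<Rightarrow> nat set \<Rightarrow> nat set" where "sd X Y = (X - Y) \<union> (Y - X)"

lemma pairs_eq: "{(a, b). a = k \<and> b = l \<and> b < (a::nat)} = (if l < k then {(k,l)} else {})"
  by auto
lemma bs0: "bsign {} B = 1" unfolding bsign_def by simp
lemma bsjj: "bsign {j} {j} = -1" unfolding bsign_def by (simp add: pairs_eq)
lemma bsk0: "bsign {k} {} = 1" unfolding bsign_def by simp
lemma bskl: "k \<noteq> l \<Longrightarrow> bsign {k} {l} = - bsign {l} {k}" unfolding bsign_def by (auto simp: pairs_eq)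

lemma clmul_e:
  assumes "i < 4" "C \<in> blades"
  shows "clmul (ebasis i) q C = bsign (bset i) (sd C (bset i)) * q (sd C (bset i))"
proof -
  have fin: "finite blades" by (simp add: blades_def)
  have bi: "bset i \<in> blades" using assms(1) by (auto simp: blades_def bset_def)
  have sdb: "sd C (bset i) \<in> blades" using assms bi by (auto simp: blades_def sd_def)
  have "clmul (ebasis i) q C = (\<Sum>A\<in>blades. \<Sum>B\<in>blades.
      if A = bset i \<and> B = sd C (bset i) then bsign A B * q B else 0)"
    unfolding clmul_def ebasis_def
    by (intro sum.cong refl) (auto simp: sd_def)
  also have "\<dots> = (\<Sum>A\<in>blades. if A = bset i then bsign A (sd C (bset i)) * q (sd C (bset i)) else 0)"
  proof (intro sum.cong refl)
    fix A assume "A \<in> blades"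
    show "(\<Sum>B\<in>blades. if A = bset i \<and> B = sd C (bset i) then bsign A B * q B else 0) =
          (if A = bset i then bsign A (sd C (bset i)) * q (sd C (bset i)) else 0)"
    proof (cases "A = bset i")
      case True
      have "(\<Sum>B\<in>blades. if A = bset i \<and> B = sd C (bset i) then bsign A B * q B else 0) =
            (\<Sum>B\<in>blades. if B = sd C (bset i) then bsign A B * q B else 0)"
        using True by (intro sum.cong refl) simp
      also have "\<dots> = bsign A (sd C (bset i)) * q (sd C (bset i))"
        using sdb by (simp add: sum.delta[OF fin])
      finally show ?thesis using True by simp
    next
      case False
      then show ?thesis by (intro trans[OF sum.neutral]) auto
    qed
  qed
  also have "\<dots> = bsign (bset i) (sd C (bset i)) * q (sd C (bset i))"
    using bi by (simp add: sum.delta[OF fin])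
  finally show ?thesis .
qed

definition exF :: "nat set \<Rightarrow> ex" where
  "exF A = (if A = {} then RF 0 else if A = {1} then Mu (Xv 1) (Mu Iv (IF 0))
     else if A = {2} then Mu (Xv 2) (Mu Iv (IF 0)) else if A = {3} then Mu (Xv 3) (Mu Iv (IF 0))
     else Cn 0)"

definition LL :: "nat set \<Rightarrow> ex" where
  "LL A = (if A = {} then LA else if A = {1} then Mu (Xv 1) Bx
     else if A = {2} then Mu (Xv 2) Bx else if A = {3} then Mu (Xv 3) Bx
     else Cn 0)"

lemma FF_ev: "(if A = {} then Re (f (Complex (xc y 0) (vnorm y))) else 0)
                   + (\<Sum>j\<in>{1,2,3}. (xc y j / vnorm y) * ebasis j A)
                       * Im (f (Complex (xc y 0) (vnorm y))) = ev f (exF A) y"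
  by (auto simp: exF_def ebasis_def bset_def zz_def rinv_def)

lemma lap_LL:
  assumes "open U" "f holomorphic_on U" "y \<in> Sdom U"
  shows "(\<Sum>i<4. ev f (dE i (dE i (exF A))) y) = ev f (LL A) y"
proof -
  have v: "vnorm y \<noteq> 0" using assms(3) by (simp add: Sdom_def)
  consider "A = {}" | "A = {1}" | "A = {2}" | "A = {3}" | "A \<noteq> {} \<and> A \<noteq> {1} \<and> A \<noteq> {2} \<and> A \<noteq> {3}" by blast
  then show ?thesis
  proof cases
    case 1 then show ?thesis using id0[OF v] by (simp add: exF_def LL_def)
  next
    case 2 then show ?thesis using idj[OF v, of 1] by (simp add: exF_def LL_def)
  next
    case 3 then show ?thesis using idj[OF v, of 2] by (simp add: exF_def LL_def)
  next
    case 4 then show ?thesis using idj[OF v, of 3] by (simp add: exF_def LL_def)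
  next
    case 5 then show ?thesis by (simp add: exF_def LL_def sum4)
  qed
qed

lemma sd_facts:
  "sd {} (bset 0) = {}"
  "sd {} (bset 1) = {1}"
  "sd {} (bset 2) = {2}"
  "sd {} (bset 3) = {3}"
  "sd {1} (bset 0) = {1}"
  "sd {1} (bset 1) = {}"
  "sd {1} (bset 2) = {1,2}"
  "sd {1} (bset 3) = {1,3}"
  "sd {2} (bset 0) = {2}"
  "sd {2} (bset 1) = {1,2}"
  "sd {2} (bset 2) = {}"
  "sd {2} (bset 3) = {2,3}"
  "sd {3} (bset 0) = {3}"
  "sd {3} (bset 1) = {1,3}"
  "sd {3} (bset 2) = {2,3}"
  "sd {3} (bset 3) = {}"
  "sd {1,2} (bset 0) = {1,2}"
  "sd {1,2} (bset 1) = {2}"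
  "sd {1,2} (bset 2) = {1}"
  "sd {1,2} (bset 3) = {1,2,3}"
  "sd {1,3} (bset 0) = {1,3}"
  "sd {1,3} (bset 1) = {3}"
  "sd {1,3} (bset 2) = {1,2,3}"
  "sd {1,3} (bset 3) = {1}"
  "sd {2,3} (bset 0) = {2,3}"
  "sd {2,3} (bset 1) = {1,2,3}"
  "sd {2,3} (bset 2) = {3}"
  "sd {2,3} (bset 3) = {2}"
  "sd {1,2,3} (bset 0) = {1,2,3}"
  "sd {1,2,3} (bset 1) = {2,3}"
  "sd {1,2,3} (bset 2) = {1,3}"
  "sd {1,2,3} (bset 3) = {1,2}"
  by (auto simp: sd_def bset_def)

lemma LL_facts:
  "LL {} = LA"
  "LL {1} = Mu (Xv 1) Bx"
  "LL {2} = Mu (Xv 2) Bx"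
  "LL {3} = Mu (Xv 3) Bx"
  "LL {1,2} = Cn 0"
  "LL {1,3} = Cn 0"
  "LL {2,3} = Cn 0"
  "LL {1,2,3} = Cn 0"
  by (auto simp: LL_def)

lemma bskl': "k \<noteq> l \<Longrightarrow> bsign {k} {l} = (if l < k then -1 else 1)"
  unfolding bsign_def by (simp add: pairs_eq)

lemma Dop_fin:
  assumes "vnorm x \<noteq> 0" "C \<in> blades"
  shows "(\<Sum>i<4. bsign (bset i) (sd C (bset i)) * ev f (dE i (LL (sd C (bset i)))) x) = 0"
proof -
  have C: "C = {} \<or> C = {1} \<or> C = {2} \<or> C = {3} \<or> C = {1,2} \<or> C = {1,3} \<or> C = {2,3} \<or> C = {1,2,3}"
    using assms(2) unfolding blades_eq by simp
  note f0 = fin0[OF assms(1), of f]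
  note f1 = fin1[of 1 f x] fin1[of 2 f x] fin1[of 3 f x]
  note f2 = fin2[of 1 2 f x] fin2[of 1 3 f x] fin2[of 2 3 f x]
  have b0: "bset 0 = {}" "bset 1 = {1}" "bset 2 = {2}" "bset 3 = {3}" by (simp_all add: bset_def)
  from C show ?thesis
    apply (elim disjE)
    apply (simp_all only: sum4 sd_facts LL_facts)
    apply (simp_all only: b0 bs0 bsjj bsk0 bskl')
    using f0 f1 f2 
    apply (simp_all add: algebra_simps)
    done
qed


lemma main:
  assumes U: "open U" "f holomorphic_on U" and FF: "\<And>y A. FF y A = ev f (exF A) y"
  shows "holomorphic_cliffordian FF (Sdom U)"
proof -
  have S: "open (Sdom U)" by (rule open_Sdom[OF U(1)])
  have g1: "\<And>A i y. i < 4 \<Longrightarrow> y \<in> Sdom U \<Longrightarrow> pd i (\<lambda>y. FF y A) y = ev f (dE i (exF A)) y"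
    by (rule pd_ev[OF U S]) (auto simp: FF)
  have g2: "\<And>A i j y. i < 4 \<Longrightarrow> j < 4 \<Longrightarrow> y \<in> Sdom U \<Longrightarrow>
       pd j (pd i (\<lambda>y. FF y A)) y = ev f (dE j (dE i (exF A))) y"
    by (rule pd_ev[OF U S]) (auto simp: g1)
  have d1: "diff3_on (\<lambda>y. FF y A) (Sdom U)" for A
    unfolding diff3_on_def differentiable_on_eq_differentiable_at[OF S]
  proof (intro conjI allI impI ballI)
    fix x assume "x \<in> Sdom U"
    then show "(\<lambda>y. FF y A) differentiable at x"
      by (rule diff_ev[OF U S]) (auto simp: FF)
  next
    fix i :: nat and x assume "i < 4" "x \<in> Sdom U"
    then show "pd i (\<lambda>y. FF y A) differentiable at x"
      by (intro diff_ev[OF U S, of x _ "dE i (exF A)"]) (auto simp: g1)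
  next
    fix i j :: nat and x assume "i < 4" "j < 4" "x \<in> Sdom U"
    then show "pd j (pd i (\<lambda>y. FF y A)) differentiable at x"
      by (intro diff_ev[OF U S, of x _ "dE j (dE i (exF A))"]) (auto simp: g2)
  qed
  have lapS: "lap FF y A = ev f (LL A) y" if y: "y \<in> Sdom U" for A y
  proof -
    have "lap FF y A = (\<Sum>i<4. pd i (pd i (\<lambda>y. FF y A)) y)" by (simp add: lap_def)
    also have "\<dots> = (\<Sum>i<4. ev f (dE i (dE i (exF A))) y)"
      by (intro sum.cong refl) (auto simp: g2 y)
    also have "\<dots> = ev f (LL A) y" by (rule lap_LL[OF U y])
    finally show ?thesis .
  qed
  have d2: "Dop (lap FF) x C = 0" if x: "x \<in> Sdom U" and C: "C \<in> blades" for x C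
  proof -
    have "Dop (lap FF) x C = (\<Sum>i<4. clmul (ebasis i) (\<lambda>A. pd i (\<lambda>y. lap FF y A) x) C)"
      by (simp add: Dop_def)
    also have "\<dots> = (\<Sum>i<4. bsign (bset i) (sd C (bset i)) * pd i (\<lambda>y. lap FF y (sd C (bset i))) x)"
      by (intro sum.cong refl) (auto simp: clmul_e C)
    also have "\<dots> = (\<Sum>i<4. bsign (bset i) (sd C (bset i)) * ev f (dE i (LL (sd C (bset i)))) x)"
    proof (intro sum.cong refl)
      fix i assume "i \<in> {..<(4::nat)}"
      then have "pd i (\<lambda>y. lap FF y (sd C (bset i))) x = ev f (dE i (LL (sd C (bset i)))) x"
        by (intro pd_ev[OF U S x]) (auto simp: lapS)
      then show "bsign (bset i) (sd C (bset i)) * pd i (\<lambda>y. lap FF y (sd C (bset i))) x =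
                 bsign (bset i) (sd C (bset i)) * ev f (dE i (LL (sd C (bset i)))) x" by simp
    qed
    also have "\<dots> = 0"
      using x C by (intro Dop_fin) (auto simp: Sdom_def)
    finally show ?thesis .
  qed
  show ?thesis unfolding holomorphic_cliffordian_def using d1 d2 by blast
qed

theorem lemma2:
  fixes U :: "complex set" and f :: "complex \<Rightarrow> complex"
  assumes "open U" and "f holomorphic_on U"
  shows "holomorphic_cliffordian
           (\<lambda>x. (\<lambda>A. (if A = {} then Re (f (Complex (xc x 0) (vnorm x))) else 0)
                   + (\<Sum>j\<in>{1,2,3}. (xc x j / vnorm x) * ebasis j A)
                       * Im (f (Complex (xc x 0) (vnorm x)))))
           {x. vnorm x \<noteq> 0 \<and> Complex (xc x 0) (vnorm x) \<in> U}"
proof -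
  have "{x. vnorm x \<noteq> 0 \<and> Complex (xc x 0) (vnorm x) \<in> U} = Sdom U"
    by (simp add: Sdom_def zz_def)
  then show ?thesis
    using main[OF assms, where FF = "\<lambda>x. (\<lambda>A. (if A = {} then Re (f (Complex (xc x 0) (vnorm x))) else 0)
                   + (\<Sum>j\<in>{1,2,3}. (xc x j / vnorm x) * ebasis j A)
                       * Im (f (Complex (xc x 0) (vnorm x))))"]
    by (simp only: FF_ev)
qed

end
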